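(* Let $\eta,\omega\in\mathbb{R}$ with $\omega\ne0$. For every $s>2$ and $f\in\mathcal{A}_S$, the operators $A_{s,c}(f):=\hat\rho(f)\,\hat\theta^{1+c}\,(1+\hat D^2+\mathcal{T}^2)^{-s/2}$ on $\hat H$ satisfy $A_{s,0}(f)=\lim_{c\downarrow0}A_{s,c}(f)$ in operator norm.
   Context: $\hat{H}=L^2(\mathbb{R}^2,da\,db)$ with elements $\xi(a)(b)$; $\mathcal{A}_S=\mathcal{S}_c(\mathbb{R}^2)$ the Schwartz functions $f(a)(b)$ with compact support in $a$; $(\hat\rho(f)\xi)(a)(b)=e^{-a}\int_{\mathbb{R}^2}da'db'\,f(a')(e^{-a}b')\xi(a-a')(b-b')$; multiplication operators $(\hat D\xi)(a)(b)=e^{-a}b\,\xi(a)(b)$, $(\mathcal{T}\xi)(a)(b)=(\eta+\omega e^{-a})\xi(a)(b)$, $(\hat\theta\xi)(a)(b)=e^{-a}\xi(a)(b)$. *)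

theory Defs
  imports "HOL-Analysis.Analysis"
begin

text \<open>Elements of H = L^2(R^2, da db) are represented by functions xi a b.\<close>

type_synonym fn2 = "real \<Rightarrow> real \<Rightarrow> complex"

text \<open>Iterated partial derivatives: True = derivative in the first variable a,
  False = derivative in the second variable b (applied from the end of the list).\<close>
fun pdiff :: "bool list \<Rightarrow> fn2 \<Rightarrow> fn2" where
  "pdiff [] f = f"
| "pdiff (d # ds) f =
     (if d then (\<lambda>a b. vector_derivative (\<lambda>t. pdiff ds f t b) (at a))
      else (\<lambda>a b. vector_derivative (\<lambda>t. pdiff ds f a t) (at b)))"

definition schwartz :: "fn2 \<Rightarrow> bool" where
  "schwartz f \<longleftrightarrow>
     (\<forall>ds. (\<forall>a b. (\<lambda>t. pdiff ds f t b) differentiable (at a)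
                 \<and> (\<lambda>t. pdiff ds f a t) differentiable (at b))
          \<and> (\<forall>N::nat. \<exists>C. \<forall>a b. (1 + a\<^sup>2 + b\<^sup>2) ^ N * cmod (pdiff ds f a b) \<le> C))"

definition A_S :: "fn2 set" where
  "A_S = {f. schwartz f \<and> (\<exists>R. \<forall>a b. \<bar>a\<bar> > R \<longrightarrow> f a b = 0)}"

definition l2sq :: "fn2 \<Rightarrow> ennreal" where
  "l2sq xi = (\<integral>\<^sup>+ p. ennreal ((cmod (xi (fst p) (snd p)))\<^sup>2) \<partial>(lborel :: (real \<times> real) measure))"

definition L2 :: "fn2 set" where
  "L2 = {xi. (\<lambda>p. xi (fst p) (snd p)) \<in> borel_measurable (lborel :: (real \<times> real) measure)
             \<and> l2sq xi < \<infinity>}"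

definition opnorm_sq :: "(fn2 \<Rightarrow> fn2) \<Rightarrow> ennreal" where
  "opnorm_sq T = (SUP xi \<in> {xi \<in> L2. l2sq xi \<le> 1}. l2sq (T xi))"

definition rho :: "fn2 \<Rightarrow> fn2 \<Rightarrow> fn2" where
  "rho f xi = (\<lambda>a b. complex_of_real (exp (- a)) *
      (\<integral>p. f (fst p) (exp (- a) * snd p) * xi (a - fst p) (b - snd p)
        \<partial>(lborel :: (real \<times> real) measure)))"

definition Dfun :: "real \<Rightarrow> real \<Rightarrow> real" where
  "Dfun a b = exp (- a) * b"

definition Tfun :: "real \<Rightarrow> real \<Rightarrow> real \<Rightarrow> real \<Rightarrow> real" where
  "Tfun \<eta> \<omega> a b = \<eta> + \<omega> * exp (- a)"

definition thetafun :: "real \<Rightarrow> real \<Rightarrow> real" where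
  "thetafun a b = exp (- a)"

definition mult_op :: "(real \<Rightarrow> real \<Rightarrow> real) \<Rightarrow> fn2 \<Rightarrow> fn2" where
  "mult_op m xi = (\<lambda>a b. complex_of_real (m a b) * xi a b)"

definition theta_pow :: "real \<Rightarrow> fn2 \<Rightarrow> fn2" where
  "theta_pow c = mult_op (\<lambda>a b. thetafun a b powr (1 + c))"

definition resolv :: "real \<Rightarrow> real \<Rightarrow> real \<Rightarrow> fn2 \<Rightarrow> fn2" where
  "resolv \<eta> \<omega> s = mult_op (\<lambda>a b. (1 + (Dfun a b)\<^sup>2 + (Tfun \<eta> \<omega> a b)\<^sup>2) powr (- s / 2))"

definition A_op :: "real \<Rightarrow> real \<Rightarrow> real \<Rightarrow> real \<Rightarrow> fn2 \<Rightarrow> fn2 \<Rightarrow> fn2" where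
  "A_op \<eta> \<omega> s c f = rho f \<circ> theta_pow c \<circ> resolv \<eta> \<omega> s"

end

theory Submission
  imports Defs "HOL-Probability.Sinc_Integral"
begin

lemma meas_pair_iff: "(G \<in> borel_measurable (lborel \<Otimes>\<^sub>M lborel)) = (G \<in> borel_measurable (borel :: (real\<times>real) measure))"
  by (simp add: lborel_prod)

lemma fst_meas[measurable]: "fst \<in> borel_measurable (borel :: (real\<times>real) measure)"
  by (intro borel_measurable_continuous_onI continuous_intros)
lemma snd_meas[measurable]: "snd \<in> borel_measurable (borel :: (real\<times>real) measure)"
  by (intro borel_measurable_continuous_onI continuous_intros)

lemma nn_pair:
  fixes G :: "real \<times> real \<Rightarrow> ennreal"
  assumes "G \<in> borel_measurable borel"
  shows "(\<integral>\<^sup>+p. G p \<partial>lborel) = (\<integral>\<^sup>+x. \<integral>\<^sup>+y. G (x,y) \<partial>lborel \<partial>lborel)"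
proof -
  have "G \<in> borel_measurable (lborel \<Otimes>\<^sub>M lborel)" using assms meas_pair_iff by blast
  from lborel.nn_integral_fst[OF this] show ?thesis by (simp add: lborel_prod)
qed

lemma affine2:
  fixes G :: "real \<times> real \<Rightarrow> ennreal"
  assumes G[measurable]: "G \<in> borel_measurable borel" and c1: "c1 \<noteq> 0" and c2: "c2 \<noteq> 0"
  shows "(\<integral>\<^sup>+p. G p \<partial>lborel) = ennreal (\<bar>c1\<bar> * \<bar>c2\<bar>) * (\<integral>\<^sup>+p. G (t1 + c1 * fst p, t2 + c2 * snd p) \<partial>lborel)"
proof -
  have G'[measurable]: "G \<in> borel_measurable (borel \<Otimes>\<^sub>M borel)" using G by (simp add: borel_prod)
  have m2: "(\<lambda>p. G (t1 + c1 * fst p, t2 + c2 * snd p)) \<in> borel_measurable borel" by measurable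
  have "(\<integral>\<^sup>+p. G p \<partial>lborel) = (\<integral>\<^sup>+x. \<integral>\<^sup>+y. G (x,y) \<partial>lborel \<partial>lborel)" by (rule nn_pair[OF G])
  also have "\<dots> = (\<integral>\<^sup>+x. ennreal \<bar>c2\<bar> * \<integral>\<^sup>+y. G (x,t2 + c2 * y) \<partial>lborel \<partial>lborel)"
    by (intro nn_integral_cong nn_integral_real_affine[OF _ c2]) measurable
  also have "\<dots> = ennreal \<bar>c2\<bar> * (\<integral>\<^sup>+x. \<integral>\<^sup>+y. G (x,t2 + c2 * y) \<partial>lborel \<partial>lborel)"
    by (rule nn_integral_cmult) measurable
  also have "(\<integral>\<^sup>+x. \<integral>\<^sup>+y. G (x,t2 + c2 * y) \<partial>lborel \<partial>lborel) = ennreal \<bar>c1\<bar> * (\<integral>\<^sup>+x. \<integral>\<^sup>+y. G (t1 + c1 * x,t2 + c2 * y) \<partial>lborel \<partial>lborel)"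
    by (rule nn_integral_real_affine[OF _ c1]) measurable
  also have "(\<integral>\<^sup>+x. \<integral>\<^sup>+y. G (t1 + c1 * x,t2 + c2 * y) \<partial>lborel \<partial>lborel) = (\<integral>\<^sup>+p. G (t1 + c1 * fst p, t2 + c2 * snd p) \<partial>lborel)"
    using nn_pair[OF m2] by simp
  finally show ?thesis by (simp add: ennreal_mult mult_ac)
qed

lemma shear:
  fixes G :: "real \<times> real \<Rightarrow> ennreal"
  assumes G[measurable]: "G \<in> borel_measurable borel" and tau[measurable]: "\<tau> \<in> borel_measurable borel"
  shows "(\<integral>\<^sup>+p. G (fst p - \<alpha>, snd p - \<tau> (fst p)) \<partial>lborel) = (\<integral>\<^sup>+p. G p \<partial>lborel)"
proof -
  have G'[measurable]: "G \<in> borel_measurable (borel \<Otimes>\<^sub>M borel)" using G by (simp add: borel_prod)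
  have m2: "(\<lambda>p. G (fst p - \<alpha>, snd p - \<tau> (fst p))) \<in> borel_measurable borel" by measurable
  have "(\<integral>\<^sup>+p. G (fst p - \<alpha>, snd p - \<tau> (fst p)) \<partial>lborel) = (\<integral>\<^sup>+x. \<integral>\<^sup>+y. G (x - \<alpha>, y - \<tau> x) \<partial>lborel \<partial>lborel)"
    using nn_pair[OF m2] by simp
  also have "\<dots> = (\<integral>\<^sup>+x. \<integral>\<^sup>+y. G (x - \<alpha>, y) \<partial>lborel \<partial>lborel)"
  proof (rule nn_integral_cong)
    fix x
    have "(\<integral>\<^sup>+y. G (x - \<alpha>, y) \<partial>lborel) = ennreal \<bar>1\<bar> * (\<integral>\<^sup>+y. G (x - \<alpha>, (- \<tau> x) + 1 * y) \<partial>lborel)"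
      by (rule nn_integral_real_affine) measurable
    moreover have "\<And>y. - \<tau> x + 1 * y = y - \<tau> x" by simp
    ultimately show "(\<integral>\<^sup>+y. G (x - \<alpha>, y - \<tau> x) \<partial>lborel) = (\<integral>\<^sup>+y. G (x - \<alpha>, y) \<partial>lborel)"
      by simp
  qed
  also have "\<dots> = (\<integral>\<^sup>+x. \<integral>\<^sup>+y. G (x, y) \<partial>lborel \<partial>lborel)"
  proof -
    have Hm: "(\<lambda>x. \<integral>\<^sup>+y. G (x, y) \<partial>lborel) \<in> borel_measurable borel"
      using lborel.borel_measurable_nn_integral_fst[of G lborel] G' by (simp add: lborel_prod)
    have "(\<integral>\<^sup>+x. \<integral>\<^sup>+y. G (x, y) \<partial>lborel \<partial>lborel) = ennreal \<bar>1\<bar> * (\<integral>\<^sup>+x. \<integral>\<^sup>+y. G ((- \<alpha>) + 1 * x, y) \<partial>lborel \<partial>lborel)"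
      by (rule nn_integral_real_affine[OF Hm]) simp
    then show ?thesis by simp
  qed
  also have "\<dots> = (\<integral>\<^sup>+p. G p \<partial>lborel)" using nn_pair[OF G] by simp
  finally show ?thesis .
qed

lemma id_meas[measurable]: "(\<lambda>x. x) \<in> measurable (borel :: (real\<times>real) measure) (borel \<Otimes>\<^sub>M borel)"
  by (simp add: borel_prod)

definition Zf :: "fn2 \<Rightarrow> real \<times> real \<Rightarrow> complex" where "Zf \<xi> p = \<xi> (fst p) (snd p)"

lemma norm_int_le: "ennreal (norm (integral\<^sup>L M g)) \<le> (\<integral>\<^sup>+x. ennreal (norm (g x)) \<partial>M)"
  by (cases "integrable M g") (auto simp: integral_norm_bound_ennreal not_integrable_integral_eq)

lemma rho_subst:
  assumes mf[measurable]: "Zf f \<in> borel_measurable (borel \<Otimes>\<^sub>M borel)"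
    and mz[measurable]: "Zf \<zeta> \<in> borel_measurable (borel \<Otimes>\<^sub>M borel)"
  shows "(\<integral>\<^sup>+q. ennreal (norm (Zf f (fst q, exp (-a) * snd q) * Zf \<zeta> (a - fst q, b - snd q))) \<partial>lborel)
     = ennreal (exp a) * (\<integral>\<^sup>+q. ennreal (norm (Zf f q) * norm (Zf \<zeta> (a - fst q, b - exp a * snd q))) \<partial>lborel)"
proof -
  let ?G = "\<lambda>q. ennreal (norm (Zf f (fst q, exp (-a) * snd q) * Zf \<zeta> (a - fst q, b - snd q)))"
  have Gm: "?G \<in> borel_measurable borel" by measurable
  have "(\<integral>\<^sup>+q. ?G q \<partial>lborel) = ennreal (\<bar>1\<bar> * \<bar>exp a\<bar>) * (\<integral>\<^sup>+q. ?G (0 + 1 * fst q, 0 + exp a * snd q) \<partial>lborel)"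
    by (rule affine2[OF Gm]) auto
  also have "(\<lambda>q. ?G (0 + 1 * fst q, 0 + exp a * snd q)) = (\<lambda>q. ennreal (norm (Zf f q) * norm (Zf \<zeta> (a - fst q, b - exp a * snd q))))"
    by (auto simp: norm_mult exp_minus field_simps)
  finally show ?thesis by simp
qed

lemma cs_pt:
  assumes mf[measurable]: "Zf f \<in> borel_measurable (borel \<Otimes>\<^sub>M borel)"
    and mz[measurable]: "Zf \<zeta> \<in> borel_measurable (borel \<Otimes>\<^sub>M borel)"
  shows "(\<integral>\<^sup>+q. ennreal (norm (Zf f q) * norm (Zf \<zeta> (a - fst q, b - e * snd q))) \<partial>lborel)\<^sup>2
    \<le> (\<integral>\<^sup>+q. ennreal (norm (Zf f q)) \<partial>lborel) * (\<integral>\<^sup>+q. ennreal (norm (Zf f q) * (norm (Zf \<zeta> (a - fst q, b - e * snd q)))\<^sup>2) \<partial>lborel)"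
proof -
  let ?u = "\<lambda>q. ennreal (sqrt (norm (Zf f q)))"
  let ?v = "\<lambda>q. ennreal (sqrt (norm (Zf f q)) * norm (Zf \<zeta> (a - fst q, b - e * snd q)))"
  have um: "?u \<in> borel_measurable lborel" by measurable
  have vm: "?v \<in> borel_measurable lborel" by measurable
  have 1: "\<And>q. ?u q * ?v q = ennreal (norm (Zf f q) * norm (Zf \<zeta> (a - fst q, b - e * snd q)))"
    by (simp add: ennreal_mult'[symmetric] mult.assoc[symmetric])
  have 2: "\<And>q. ?u q ^ 2 = ennreal (norm (Zf f q))"
    by (simp add: ennreal_power)
  have 3: "\<And>q. ?v q ^ 2 = ennreal (norm (Zf f q) * (norm (Zf \<zeta> (a - fst q, b - e * snd q)))\<^sup>2)"
    by (simp add: ennreal_power power_mult_distrib)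
  show ?thesis using Cauchy_Schwarz_nn_integral[OF um vm] unfolding 1 2 3 .
qed

lemma meas_lb2: "(h \<in> borel_measurable (lborel \<Otimes>\<^sub>M lborel)) = (h \<in> borel_measurable ((borel::(real\<times>real) measure) \<Otimes>\<^sub>M (borel::(real\<times>real) measure)))"
  by (simp add: measurable_cong_sets[OF sets_pair_measure_cong[OF sets_lborel sets_lborel] refl])

lemma rho_pt2:
  assumes mf[measurable]: "Zf f \<in> borel_measurable (borel \<Otimes>\<^sub>M borel)"
    and mz[measurable]: "Zf \<zeta> \<in> borel_measurable (borel \<Otimes>\<^sub>M borel)"
  shows "ennreal ((cmod (rho f \<zeta> a b))\<^sup>2) \<le> (\<integral>\<^sup>+q. ennreal (norm (Zf f q)) \<partial>lborel) *
     (\<integral>\<^sup>+q. ennreal (norm (Zf f q) * (norm (Zf \<zeta> (a - fst q, b - exp a * snd q)))\<^sup>2) \<partial>lborel)"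
proof -
  let ?g = "\<lambda>q. Zf f (fst q, exp (-a) * snd q) * Zf \<zeta> (a - fst q, b - snd q)"
  let ?I = "\<integral>\<^sup>+q. ennreal (norm (Zf f q) * norm (Zf \<zeta> (a - fst q, b - exp a * snd q))) \<partial>lborel"
  have r: "rho f \<zeta> a b = complex_of_real (exp (-a)) * integral\<^sup>L lborel ?g"
    by (simp add: rho_def Zf_def)
  have "ennreal (cmod (rho f \<zeta> a b)) = ennreal (exp (-a)) * ennreal (norm (integral\<^sup>L lborel ?g))"
    by (simp add: r norm_mult ennreal_mult)
  also have "\<dots> \<le> ennreal (exp (-a)) * (\<integral>\<^sup>+q. ennreal (norm (?g q)) \<partial>lborel)"
    by (intro mult_left_mono norm_int_le) auto
  also have "\<dots> = ennreal (exp (-a)) * (ennreal (exp a) * ?I)"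
    by (subst rho_subst[OF mf mz]) simp
  also have "\<dots> = ?I"
    by (simp add: mult.assoc[symmetric] ennreal_mult[symmetric] exp_minus)
  finally have "ennreal (cmod (rho f \<zeta> a b)) \<le> ?I" .
  then have "ennreal (cmod (rho f \<zeta> a b)) ^ 2 \<le> ?I ^ 2" by (rule power_mono) simp
  also have "\<dots> \<le> (\<integral>\<^sup>+q. ennreal (norm (Zf f q)) \<partial>lborel) *
     (\<integral>\<^sup>+q. ennreal (norm (Zf f q) * (norm (Zf \<zeta> (a - fst q, b - exp a * snd q)))\<^sup>2) \<partial>lborel)"
    by (rule cs_pt[OF mf mz])
  finally show ?thesis by (simp add: ennreal_power)
qed

lemma rho_l2:
  assumes mf[measurable]: "Zf f \<in> borel_measurable (borel \<Otimes>\<^sub>M borel)"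
    and mz[measurable]: "Zf \<zeta> \<in> borel_measurable (borel \<Otimes>\<^sub>M borel)"
  shows "l2sq (rho f \<zeta>) \<le> (\<integral>\<^sup>+q. ennreal (norm (Zf f q)) \<partial>lborel) * (\<integral>\<^sup>+q. ennreal (norm (Zf f q)) \<partial>lborel) * l2sq \<zeta>"
proof -
  define K where "K = (\<integral>\<^sup>+q. ennreal (norm (Zf f q)) \<partial>lborel)"
  define H where "H = (\<lambda>(p::real\<times>real) (q::real\<times>real). K * (ennreal (norm (Zf f q)) * ennreal ((norm (Zf \<zeta> (fst p - fst q, snd p - exp (fst p) * snd q)))\<^sup>2)))"
  have Hm: "case_prod H \<in> borel_measurable (lborel \<Otimes>\<^sub>M lborel)"
    unfolding meas_lb2 H_def by measurable
  have "l2sq (rho f \<zeta>) \<le> (\<integral>\<^sup>+p. (\<integral>\<^sup>+q. H p q \<partial>lborel) \<partial>lborel)"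
    unfolding l2sq_def
  proof (rule nn_integral_mono)
    fix p :: "real \<times> real"
    have "ennreal ((cmod (rho f \<zeta> (fst p) (snd p)))\<^sup>2) \<le> K *
     (\<integral>\<^sup>+q. ennreal (norm (Zf f q) * (norm (Zf \<zeta> (fst p - fst q, snd p - exp (fst p) * snd q)))\<^sup>2) \<partial>lborel)"
      unfolding K_def by (rule rho_pt2[OF mf mz])
    also have "\<dots> = (\<integral>\<^sup>+q. H p q \<partial>lborel)"
      unfolding H_def
      by (subst nn_integral_cmult[symmetric]) (measurable, simp add: ennreal_mult)
    finally show "ennreal ((cmod (rho f \<zeta> (fst p) (snd p)))\<^sup>2) \<le> (\<integral>\<^sup>+q. H p q \<partial>lborel)" .
  qed
  also have "\<dots> = (\<integral>\<^sup>+q. (\<integral>\<^sup>+p. H p q \<partial>lborel) \<partial>lborel)"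
    by (rule lborel_pair.Fubini'[OF Hm, symmetric])
  also have "\<dots> = (\<integral>\<^sup>+q. K * ennreal (norm (Zf f q)) * l2sq \<zeta> \<partial>lborel)"
  proof (rule nn_integral_cong)
    fix q :: "real \<times> real"
    let ?G = "\<lambda>p. ennreal ((norm (Zf \<zeta> p))\<^sup>2)"
    have Gm: "?G \<in> borel_measurable borel" by measurable
    have tm: "(\<lambda>x. exp x * snd q) \<in> borel_measurable borel" by measurable
    have "(\<integral>\<^sup>+p. H p q \<partial>lborel) = K * ennreal (norm (Zf f q)) * (\<integral>\<^sup>+p. ?G (fst p - fst q, snd p - exp (fst p) * snd q) \<partial>lborel)"
      unfolding H_def
      by (subst nn_integral_cmult[symmetric]) (measurable, simp add: mult.assoc)
    also have "(\<integral>\<^sup>+p. ?G (fst p - fst q, snd p - exp (fst p) * snd q) \<partial>lborel) = l2sq \<zeta>"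
      using shear[OF Gm tm, of "fst q"] by (simp add: l2sq_def Zf_def)
    finally show "(\<integral>\<^sup>+p. H p q \<partial>lborel) = K * ennreal (norm (Zf f q)) * l2sq \<zeta>" .
  qed
  also have "\<dots> = K * K * l2sq \<zeta>"
  proof -
    have "(\<lambda>q. K * ennreal (norm (Zf f q)) * l2sq \<zeta>) = (\<lambda>q. (K * l2sq \<zeta>) * ennreal (norm (Zf f q)))"
      by (simp add: mult_ac)
    moreover have "(\<integral>\<^sup>+q. (K * l2sq \<zeta>) * ennreal (norm (Zf f q)) \<partial>lborel) = (K * l2sq \<zeta>) * K"
      unfolding K_def by (rule nn_integral_cmult) measurable
    ultimately show ?thesis by (simp add: mult_ac)
  qed
  finally show ?thesis unfolding K_def .
qed

lemma vd_bound:
  fixes g :: "real \<Rightarrow> complex"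
  assumes d: "\<And>t. g differentiable (at t)" and B: "\<And>t. norm (vector_derivative g (at t)) \<le> B"
  shows "norm (g x - g y) \<le> B * \<bar>x - y\<bar>"
proof -
  have "norm (g x - g y) \<le> B * norm (x - y)"
  proof (rule differentiable_bound[where S=UNIV and f'="\<lambda>t h. h *\<^sub>R vector_derivative g (at t)"])
    fix t :: real
    show "(g has_derivative (\<lambda>h. h *\<^sub>R vector_derivative g (at t))) (at t within UNIV)"
      using d[of t] by (simp add: vector_derivative_works has_vector_derivative_def)
    have "onorm (\<lambda>h::real. h *\<^sub>R vector_derivative g (at t)) = onorm (\<lambda>h::real. h) * norm (vector_derivative g (at t))"
      by (rule onorm_scaleR_left) (rule bounded_linear_ident)
    then show "onorm (\<lambda>h::real. h *\<^sub>R vector_derivative g (at t)) \<le> B" using B[of t] by (simp add: onorm_id)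
  qed auto
  then show ?thesis by simp
qed

lemma schwartz_cont:
  assumes "schwartz f"
  shows "continuous_on UNIV (Zf f)"
proof -
  have d0: "\<And>a b. (\<lambda>t. f t b) differentiable (at a)" "\<And>a b. (\<lambda>t. f a t) differentiable (at b)"
    using assms unfolding schwartz_def by (metis pdiff.simps(1))+
  obtain B1 where B1: "\<And>a b. (1 + a\<^sup>2 + b\<^sup>2) ^ 0 * cmod (pdiff [True] f a b) \<le> B1"
    using assms unfolding schwartz_def by blast
  obtain B2 where B2: "\<And>a b. (1 + a\<^sup>2 + b\<^sup>2) ^ 0 * cmod (pdiff [False] f a b) \<le> B2"
    using assms unfolding schwartz_def by blast
  have l1: "norm (f x b - f y b) \<le> B1 * \<bar>x - y\<bar>" for x y b
    by (rule vd_bound[OF d0(1)]) (use B1 in simp)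
  have l2: "norm (f a x - f a y) \<le> B2 * \<bar>x - y\<bar>" for x y a
    by (rule vd_bound[OF d0(2)]) (use B2 in simp)
  have B1p: "0 \<le> B1" using B1[of 0 0] norm_ge_zero[of "pdiff [True] f 0 0"] by (simp only: power_0 mult_1)
  have B2p: "0 \<le> B2" using B2[of 0 0] norm_ge_zero[of "pdiff [False] f 0 0"] by (simp only: power_0 mult_1)
  show ?thesis unfolding continuous_on_def
  proof
    fix p0 :: "real \<times> real"
    have "((\<lambda>p. Zf f p - Zf f p0) \<longlongrightarrow> 0) (at p0 within UNIV)"
    proof (rule Lim_null_comparison)
      show "\<forall>\<^sub>F p in at p0 within UNIV. norm (Zf f p - Zf f p0) \<le> B1 * \<bar>fst p - fst p0\<bar> + B2 * \<bar>snd p - snd p0\<bar>"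
      proof (intro always_eventually allI)
        fix p :: "real \<times> real"
        have "norm (Zf f p - Zf f p0) \<le> norm (f (fst p) (snd p) - f (fst p0) (snd p)) + norm (f (fst p0) (snd p) - f (fst p0) (snd p0))"
          unfolding Zf_def using norm_triangle_ineq[of "f (fst p) (snd p) - f (fst p0) (snd p)" "f (fst p0) (snd p) - f (fst p0) (snd p0)"] by simp
        also have "\<dots> \<le> B1 * \<bar>fst p - fst p0\<bar> + B2 * \<bar>snd p - snd p0\<bar>" using l1 l2 by (intro add_mono)
        finally show "norm (Zf f p - Zf f p0) \<le> B1 * \<bar>fst p - fst p0\<bar> + B2 * \<bar>snd p - snd p0\<bar>" .
      qed
      have "((\<lambda>p. B1 * \<bar>fst p - fst p0\<bar> + B2 * \<bar>snd p - snd p0\<bar>) \<longlongrightarrow> B1 * \<bar>fst p0 - fst p0\<bar> + B2 * \<bar>snd p0 - snd p0\<bar>) (at p0 within UNIV)"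
        by (intro tendsto_intros)
      then show "((\<lambda>p. B1 * \<bar>fst p - fst p0\<bar> + B2 * \<bar>snd p - snd p0\<bar>) \<longlongrightarrow> 0) (at p0 within UNIV)" by simp
    qed
    then show "(Zf f \<longlongrightarrow> Zf f p0) (at p0 within UNIV)" by (rule LIM_zero_cancel)
  qed
qed

lemma schwartz_meas:
  assumes "schwartz f"
  shows "Zf f \<in> borel_measurable (borel \<Otimes>\<^sub>M borel)"
  using borel_measurable_continuous_onI[OF schwartz_cont[OF assms]] by (simp add: borel_prod)

lemma schwartz_decay:
  assumes "schwartz f"
  obtains C where "0 \<le> C" "\<And>x y. norm (Zf f (x,y)) \<le> C * (inverse (1 + x^2) * inverse (1 + y^2))"
proof -
  obtain C where C: "\<And>a b. (1 + a\<^sup>2 + b\<^sup>2) ^ 2 * cmod (pdiff [] f a b) \<le> C"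
    using assms unfolding schwartz_def by blast
  have "cmod (f 0 0) \<le> C" using C[of 0 0] by simp
  then have Cp: "0 \<le> C" using norm_ge_zero[of "f 0 0"] by linarith
  show ?thesis
  proof (rule that[OF Cp])
    fix x y :: real
    have p1: "0 < 1 + x^2" "0 < 1 + y^2" by (auto intro: add_pos_nonneg)
    have le: "(1 + x^2) * (1 + y^2) \<le> (1 + x\<^sup>2 + y\<^sup>2) ^ 2"
    proof -
      have eq: "(1 + x^2 + y^2)^2 = (1 + x^2)*(1 + y^2) + (x^2 + y^2 + x^2*x^2 + x^2*y^2 + y^2*y^2)"
        by (simp add: power2_eq_square algebra_simps)
      have "0 \<le> x^2 + y^2 + x^2*x^2 + x^2*y^2 + y^2*y^2" by simp
      then show ?thesis unfolding eq by linarith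
    qed
    have "(1 + x^2) * (1 + y^2) * norm (f x y) \<le> C"
      using mult_right_mono[OF le norm_ge_zero[of "f x y"]] C[of x y] by simp
    moreover have pos: "0 < (1 + x^2) * (1 + y^2)" using p1 by simp
    ultimately have "norm (f x y) \<le> C / ((1 + x^2) * (1 + y^2))"
      by (simp add: pos_le_divide_eq[OF pos] mult.commute)
    then show "norm (Zf f (x,y)) \<le> C * (inverse (1 + x^2) * inverse (1 + y^2))"
      by (simp add: Zf_def divide_inverse)
  qed
qed

lemma int_inv_sq: "(\<integral>\<^sup>+x. ennreal (inverse (1 + x^2)) \<partial>lborel) < \<infinity>"
proof -
  have "integrable lborel (\<lambda>x::real. inverse (1 + x^2))"
    using integrable_inverse_1_plus_square by (simp add: set_integrable_def)
  from integrableD(2)[OF this] show ?thesis by (simp add: less_top)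
qed

lemma schwartz_K:
  assumes "schwartz f"
  shows "(\<integral>\<^sup>+q. ennreal (norm (Zf f q)) \<partial>lborel) < \<infinity>"
proof -
  obtain C where C: "0 \<le> C" "\<And>x y. norm (Zf f (x,y)) \<le> C * (inverse (1 + x^2) * inverse (1 + y^2))"
    using schwartz_decay[OF assms] by blast
  define I where "I = (\<integral>\<^sup>+x. ennreal (inverse (1 + x^2)) \<partial>lborel)"
  have "(\<integral>\<^sup>+q. ennreal (norm (Zf f q)) \<partial>lborel) \<le> (\<integral>\<^sup>+q. ennreal (C * (inverse (1 + (fst q)^2) * inverse (1 + (snd q)^2))) \<partial>lborel)"
    by (intro nn_integral_mono ennreal_leI) (metis C(2) prod.collapse)
  also have "\<dots> = (\<integral>\<^sup>+x. \<integral>\<^sup>+y. ennreal C * (ennreal (inverse (1 + x^2)) * ennreal (inverse (1 + y^2))) \<partial>lborel \<partial>lborel)"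
    by (subst nn_pair) (measurable, simp add: ennreal_mult C add_pos_nonneg)
  also have "\<dots> = (\<integral>\<^sup>+x. ennreal C * ennreal (inverse (1 + x^2)) * I \<partial>lborel)"
    unfolding I_def by (subst nn_integral_cmult[symmetric], measurable, simp add: mult.assoc)
  also have "\<dots> = ennreal C * I * I"
  proof -
    have "(\<lambda>x. ennreal C * ennreal (inverse (1 + x^2)) * I) = (\<lambda>x. (ennreal C * I) * ennreal (inverse (1 + x^2)))"
      by (simp add: mult_ac)
    moreover have "(\<integral>\<^sup>+x. (ennreal C * I) * ennreal (inverse (1 + x^2)) \<partial>lborel) = (ennreal C * I) * I"
      unfolding I_def[of] by (rule nn_integral_cmult) measurable
    ultimately show ?thesis by (simp add: mult_ac)
  qed
  also have "\<dots> < \<infinity>" using int_inv_sq unfolding I_def by (simp add: ennreal_mult_less_top)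
  finally show ?thesis .
qed

lemma L2_meas: "\<xi> \<in> L2 \<Longrightarrow> Zf \<xi> \<in> borel_measurable (borel \<Otimes>\<^sub>M borel)"
  unfolding L2_def Zf_def
  by (simp only: mem_Collect_eq measurable_lborel2 borel_prod[symmetric])

lemma L2_fin: "\<xi> \<in> L2 \<Longrightarrow> l2sq \<xi> < \<infinity>"
  unfolding L2_def by simp

lemma integ_g:
  assumes mf[measurable]: "Zf f \<in> borel_measurable (borel \<Otimes>\<^sub>M borel)"
    and mz[measurable]: "Zf \<zeta> \<in> borel_measurable (borel \<Otimes>\<^sub>M borel)"
    and K: "(\<integral>\<^sup>+q. ennreal (norm (Zf f q)) \<partial>lborel) < \<infinity>"
    and Cf: "\<And>q. norm (Zf f q) \<le> Cf"
    and L: "l2sq \<zeta> < \<infinity>"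
  shows "integrable lborel (\<lambda>q. Zf f (fst q, exp (-a) * snd q) * Zf \<zeta> (a - fst q, b - snd q))"
proof (rule integrableI_bounded)
  show "(\<lambda>q. Zf f (fst q, exp (-a) * snd q) * Zf \<zeta> (a - fst q, b - snd q)) \<in> borel_measurable lborel"
    by measurable
  let ?I = "\<integral>\<^sup>+q. ennreal (norm (Zf f q) * norm (Zf \<zeta> (a - fst q, b - exp a * snd q))) \<partial>lborel"
  let ?J = "\<integral>\<^sup>+q. ennreal (norm (Zf f q) * (norm (Zf \<zeta> (a - fst q, b - exp a * snd q)))\<^sup>2) \<partial>lborel"
  let ?G = "\<lambda>p. ennreal ((norm (Zf \<zeta> p))\<^sup>2)"
  let ?X = "\<integral>\<^sup>+q. ?G (a + (-1) * fst q, b + (- exp a) * snd q) \<partial>lborel"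
  have Gm: "?G \<in> borel_measurable borel" by measurable
  have "l2sq \<zeta> = (\<integral>\<^sup>+p. ?G p \<partial>lborel)" by (simp add: l2sq_def Zf_def)
  also have "\<dots> = ennreal (\<bar>-1\<bar> * \<bar>- exp a\<bar>) * ?X"
    by (rule affine2[OF Gm]) auto
  finally have "ennreal (exp a) * ?X < \<infinity>" using L by simp
  then have X: "?X < \<infinity>" by (auto simp add: ennreal_mult_less_top)
  have Cf0: "0 \<le> Cf" using Cf[of 0] norm_ge_zero[of "Zf f 0"] by linarith
  have "?J \<le> (\<integral>\<^sup>+q. ennreal Cf * ?G (a + (-1) * fst q, b + (- exp a) * snd q) \<partial>lborel)"
  proof (intro nn_integral_mono)
    fix q :: "real \<times> real"
    have "norm (Zf f q) * (norm (Zf \<zeta> (a - fst q, b - exp a * snd q)))\<^sup>2 \<le> Cf * (norm (Zf \<zeta> (a - fst q, b - exp a * snd q)))\<^sup>2"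
      by (rule mult_right_mono[OF Cf]) simp
    then show "ennreal (norm (Zf f q) * (norm (Zf \<zeta> (a - fst q, b - exp a * snd q)))\<^sup>2) \<le> ennreal Cf * ?G (a + (-1) * fst q, b + (- exp a) * snd q)"
      by (simp add: ennreal_mult[symmetric] Cf0 ennreal_leI)
  qed
  also have "\<dots> = ennreal Cf * ?X" by (rule nn_integral_cmult) measurable
  also have "\<dots> < \<infinity>" using X by (simp add: ennreal_mult_less_top)
  finally have J: "?J < \<infinity>" .
  have "?I ^ 2 \<le> (\<integral>\<^sup>+q. ennreal (norm (Zf f q)) \<partial>lborel) * ?J" by (rule cs_pt[OF mf mz])
  also have "\<dots> < \<infinity>" using K J by (simp add: ennreal_mult_less_top)
  finally have "?I ^ 2 < \<infinity>" .
  then have I: "?I < \<infinity>" by (simp add: power_less_top_ennreal)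
  have "(\<integral>\<^sup>+q. ennreal (norm (Zf f (fst q, exp (-a) * snd q) * Zf \<zeta> (a - fst q, b - snd q))) \<partial>lborel) = ennreal (exp a) * ?I"
    by (rule rho_subst[OF mf mz])
  also have "\<dots> < \<infinity>" using I by (simp add: ennreal_mult_less_top)
  finally show "(\<integral>\<^sup>+q. ennreal (norm (Zf f (fst q, exp (-a) * snd q) * Zf \<zeta> (a - fst q, b - snd q))) \<partial>lborel) < \<infinity>" .
qed

lemma rho_diff:
  assumes "integrable lborel (\<lambda>q. Zf f (fst q, exp (-a) * snd q) * Zf \<zeta>1 (a - fst q, b - snd q))"
    and "integrable lborel (\<lambda>q. Zf f (fst q, exp (-a) * snd q) * Zf \<zeta>2 (a - fst q, b - snd q))"
  shows "rho f \<zeta>1 a b - rho f \<zeta>2 a b = rho f (\<lambda>x y. \<zeta>1 x y - \<zeta>2 x y) a b"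
proof -
  have "rho f \<zeta>1 a b - rho f \<zeta>2 a b = complex_of_real (exp (-a)) *
     ((\<integral>q. Zf f (fst q, exp (-a) * snd q) * Zf \<zeta>1 (a - fst q, b - snd q) \<partial>lborel) -
      (\<integral>q. Zf f (fst q, exp (-a) * snd q) * Zf \<zeta>2 (a - fst q, b - snd q) \<partial>lborel))"
    unfolding rho_def Zf_def by (simp only: right_diff_distrib fst_conv snd_conv)
  also have "\<dots> = complex_of_real (exp (-a)) *
     (\<integral>q. Zf f (fst q, exp (-a) * snd q) * Zf \<zeta>1 (a - fst q, b - snd q) - Zf f (fst q, exp (-a) * snd q) * Zf \<zeta>2 (a - fst q, b - snd q) \<partial>lborel)"
    by (subst Bochner_Integration.integral_diff[OF assms]) (rule refl)
  also have "\<dots> = rho f (\<lambda>x y. \<zeta>1 x y - \<zeta>2 x y) a b"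
    unfolding rho_def Zf_def by (simp only: right_diff_distrib fst_conv snd_conv)
  finally show ?thesis .
qed

lemma mult_l2:
  assumes "\<And>a b. \<bar>m a b\<bar> \<le> M" and mx[measurable]: "Zf \<xi> \<in> borel_measurable (borel \<Otimes>\<^sub>M borel)"
  shows "l2sq (\<lambda>a b. complex_of_real (m a b) * \<xi> a b) \<le> ennreal (M\<^sup>2) * l2sq \<xi>"
proof -
  have M0: "0 \<le> M" using assms(1)[of 0 0] by linarith
  have "l2sq (\<lambda>a b. complex_of_real (m a b) * \<xi> a b) \<le> (\<integral>\<^sup>+p. ennreal (M\<^sup>2) * ennreal ((cmod (\<xi> (fst p) (snd p)))\<^sup>2) \<partial>lborel)"
    unfolding l2sq_def
  proof (intro nn_integral_mono)
    fix p :: "real \<times> real"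
    have "\<bar>m (fst p) (snd p)\<bar>\<^sup>2 \<le> M\<^sup>2" using assms(1) by (intro power_mono) auto
    then have "(cmod (complex_of_real (m (fst p) (snd p)) * \<xi> (fst p) (snd p)))\<^sup>2 \<le> M\<^sup>2 * (cmod (\<xi> (fst p) (snd p)))\<^sup>2"
      by (simp add: norm_mult power_mult_distrib mult_right_mono)
    then show "ennreal ((cmod (complex_of_real (m (fst p) (snd p)) * \<xi> (fst p) (snd p)))\<^sup>2) \<le> ennreal (M\<^sup>2) * ennreal ((cmod (\<xi> (fst p) (snd p)))\<^sup>2)"
      by (simp add: ennreal_mult[symmetric] ennreal_leI)
  qed
  also have "\<dots> = ennreal (M\<^sup>2) * l2sq \<xi>"
  proof -
    have "(\<lambda>p. ennreal ((cmod (\<xi> (fst p) (snd p)))\<^sup>2)) = (\<lambda>p. ennreal ((cmod (Zf \<xi> p))\<^sup>2))"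
      by (simp add: Zf_def)
    moreover have "(\<lambda>p. ennreal ((cmod (Zf \<xi> p))\<^sup>2)) \<in> borel_measurable lborel" by measurable
    ultimately show ?thesis unfolding l2sq_def by (simp add: nn_integral_cmult)
  qed
  finally show ?thesis .
qed

lemma kappa_bound:
  fixes \<eta> \<omega> u :: real
  assumes "\<omega> \<noteq> 0"
  shows "\<omega>\<^sup>2 / (4 * (1 + \<eta>\<^sup>2)) * u\<^sup>2 \<le> 1 + (\<eta> + \<omega> * u)\<^sup>2"
proof -
  have h: "0 < 4 * (1 + \<eta>\<^sup>2)" by (simp add: add_pos_nonneg)
  have key: "(\<omega> * u)\<^sup>2 \<le> 4 * (1 + \<eta>\<^sup>2) * (1 + (\<eta> + \<omega> * u)\<^sup>2)"
  proof (cases "2 * \<bar>\<eta>\<bar> \<le> \<bar>\<omega> * u\<bar>")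
    case True
    have "\<bar>\<omega> * u\<bar> / 2 \<le> \<bar>\<eta> + \<omega> * u\<bar>" using True by linarith
    then have "(\<bar>\<omega> * u\<bar> / 2)\<^sup>2 \<le> \<bar>\<eta> + \<omega> * u\<bar>\<^sup>2" by (rule power_mono) simp
    then have "(\<omega> * u)\<^sup>2 \<le> 4 * (\<eta> + \<omega> * u)\<^sup>2" by (simp add: power_divide)
    moreover have "4 * (\<eta> + \<omega> * u)\<^sup>2 \<le> 4 * (1 + \<eta>\<^sup>2) * (1 + (\<eta> + \<omega> * u)\<^sup>2)"
    proof -
      have "(\<eta> + \<omega> * u)\<^sup>2 \<le> (1 + \<eta>\<^sup>2) * (1 + (\<eta> + \<omega> * u)\<^sup>2)"
        by (simp add: algebra_simps)
      then show ?thesis by (simp only: mult.assoc)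
    qed
    ultimately show ?thesis by linarith
  next
    case False
    then have "\<bar>\<omega> * u\<bar> \<le> 2 * \<bar>\<eta>\<bar>" by linarith
    then have "\<bar>\<omega> * u\<bar>\<^sup>2 \<le> (2 * \<bar>\<eta>\<bar>)\<^sup>2" by (rule power_mono) simp
    then have "(\<omega> * u)\<^sup>2 \<le> 4 * \<eta>\<^sup>2" by (simp add: power_mult_distrib)
    moreover have "4 * \<eta>\<^sup>2 \<le> 4 * (1 + \<eta>\<^sup>2) * (1 + (\<eta> + \<omega> * u)\<^sup>2)"
    proof -
      have "\<eta>\<^sup>2 \<le> (1 + \<eta>\<^sup>2) * (1 + (\<eta> + \<omega> * u)\<^sup>2)"
        by (simp add: algebra_simps)
      then show ?thesis by (simp only: mult.assoc)
    qed
    ultimately show ?thesis by linarith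
  qed
  then show ?thesis using h by (simp add: divide_le_eq power_mult_distrib mult.commute)
qed

lemma R_props:
  fixes \<eta> \<omega> s a b :: real
  assumes "\<omega> \<noteq> 0" "2 \<le> s"
  defines "R \<equiv> (1 + (Dfun a b)\<^sup>2 + (Tfun \<eta> \<omega> a b)\<^sup>2) powr (- s / 2)"
  shows "0 \<le> R" "R \<le> 1" "R * (\<omega>\<^sup>2 / (4 * (1 + \<eta>\<^sup>2)) * (exp (-a))\<^sup>2) \<le> 1"
proof -
  define X where "X = 1 + (Dfun a b)\<^sup>2 + (Tfun \<eta> \<omega> a b)\<^sup>2"
  have X1: "1 \<le> X" unfolding X_def by simp
  have "R \<le> X powr (-1)" unfolding R_def X_def[symmetric] by (rule powr_mono) (use assms X1 in auto)
  then have RX: "R \<le> 1 / X" using X1 by (simp add: powr_neg_one)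
  show "0 \<le> R" unfolding R_def by simp
  show "R \<le> 1" using RX X1 by (smt (verit) divide_le_eq_1)
  have k: "\<omega>\<^sup>2 / (4 * (1 + \<eta>\<^sup>2)) * (exp (-a))\<^sup>2 \<le> X"
    using kappa_bound[OF assms(1), of \<eta> "exp (-a)"] zero_le_power2[of "Dfun a b"] unfolding X_def Tfun_def by linarith
  have k0: "0 \<le> \<omega>\<^sup>2 / (4 * (1 + \<eta>\<^sup>2)) * (exp (-a))\<^sup>2" by (simp add: add_nonneg_nonneg)
  have "R * (\<omega>\<^sup>2 / (4 * (1 + \<eta>\<^sup>2)) * (exp (-a))\<^sup>2) \<le> (1 / X) * X"
    by (rule mult_mono[OF RX k]) (use X1 in auto)
  then show "R * (\<omega>\<^sup>2 / (4 * (1 + \<eta>\<^sup>2)) * (exp (-a))\<^sup>2) \<le> 1" using X1 by simp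
qed

lemma diff_bound:
  fixes a c \<kappa> R :: real
  assumes c: "0 < c" "c \<le> 1/2" and k: "0 < \<kappa>" and R: "0 \<le> R" "R \<le> 1" "R * (\<kappa> * (exp (-a))\<^sup>2) \<le> 1"
  shows "\<bar>(exp (-a) powr (1 + c) - exp (-a) powr (1 + 0)) * R\<bar> \<le> c * max 1 (2 / \<kappa>)"
proof -
  have p1: "exp (-a) powr (1 + c) = exp (-a * (1 + c))" by (rule exp_powr_real)
  have p0: "exp (-a) powr (1 + 0) = exp (-a)" by simp
  have p2: "exp (-a * (1 + c)) = exp (-a) * exp (- (c * a))"
    by (subst exp_add[symmetric]) (simp add: algebra_simps)
  have eq: "exp (-a) powr (1 + c) - exp (-a) powr (1 + 0) = exp (-a) * (exp (- (c * a)) - 1)"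
    unfolding p1 p0 p2 by (simp add: right_diff_distrib)
  show ?thesis
  proof (cases "0 \<le> a")
    case True
    have "exp (- (c * a)) \<ge> 1 + (- (c * a))" by (rule exp_ge_add_one_self)
    moreover have "exp (- (c * a)) \<le> 1" using True c by simp
    ultimately have d: "\<bar>exp (- (c * a)) - 1\<bar> \<le> c * a" by linarith
    have ea: "exp (-a) * a \<le> 1"
    proof -
      have "a \<le> exp a" using exp_ge_add_one_self[of a] by linarith
      then have "exp (-a) * a \<le> exp (-a) * exp a" by (intro mult_left_mono) auto
      also have "exp (-a) * exp a = 1" by (simp add: exp_minus)
      finally show ?thesis .
    qed
    have "\<bar>exp (-a) * (exp (- (c * a)) - 1) * R\<bar> = exp (-a) * \<bar>exp (- (c * a)) - 1\<bar> * R"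
      using R by (simp add: abs_mult)
    also have "\<dots> \<le> exp (-a) * (c * a) * 1"
      by (intro mult_mono d R mult_left_mono) (use True c in auto)
    also have "\<dots> = c * (exp (-a) * a)" by simp
    also have "\<dots> \<le> c * 1" using ea c by (intro mult_left_mono) auto
    also have "\<dots> \<le> c * max 1 (2 / \<kappa>)" using c by (intro mult_left_mono) auto
    finally show ?thesis unfolding eq .
  next
    case False
    define t where "t = - a"
    have t: "0 < t" using False t_def by simp
    have at: "a = - t" using t_def by simp
    have d0: "0 \<le> exp (c * t) - 1" using t c by simp
    have d1: "exp (c * t) - 1 \<le> c * t * exp (c * t)"
    proof -
      have "exp (- (c * t)) \<ge> 1 + (- (c * t))" by (rule exp_ge_add_one_self)
      then have "exp (- (c * t)) * exp (c * t) \<ge> (1 - c * t) * exp (c * t)" by (intro mult_right_mono) auto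
      moreover have "exp (- (c * t)) * exp (c * t) = 1" by (simp add: exp_minus)
      moreover have "(1 - c * t) * exp (c * t) = exp (c * t) - c * t * exp (c * t)" by (simp add: algebra_simps)
      ultimately show ?thesis by linarith
    qed
    have Rb: "R \<le> exp (- (2 * t)) / \<kappa>"
    proof -
      have "(exp (-a))\<^sup>2 = exp (2 * t)" unfolding at by (simp add: exp_double)
      then have "R * (\<kappa> * exp (2 * t)) \<le> 1" using R(3) by simp
      moreover have pos: "0 < \<kappa> * exp (2 * t)" using k by simp
      ultimately have "R \<le> 1 / (\<kappa> * exp (2 * t))" by (simp add: pos_le_divide_eq)
      also have "1 / (\<kappa> * exp (2 * t)) = exp (- (2 * t)) / \<kappa>" by (simp add: exp_minus divide_inverse mult.commute)
      finally show ?thesis .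
    qed
    have "\<bar>exp (-a) * (exp (- (c * a)) - 1) * R\<bar> = exp t * (exp (c * t) - 1) * R"
      using d0 R by (simp add: abs_mult at)
    also have "\<dots> \<le> exp t * (c * t * exp (c * t)) * (exp (- (2 * t)) / \<kappa>)"
      by (intro mult_mono mult_left_mono d1 Rb) (use d0 R k t c in auto)
    also have "\<dots> = c * (t * (exp t * exp (c * t) * exp (- (2 * t)))) / \<kappa>"
      by (simp add: mult_ac)
    also have "exp t * exp (c * t) * exp (- (2 * t)) = exp ((c - 1) * t)"
      by (simp only: exp_add[symmetric]) (simp add: algebra_simps)
    also have "c * (t * exp ((c - 1) * t)) / \<kappa> \<le> c * 2 / \<kappa>"
    proof -
      have "(c - 1) * t \<le> - t / 2" using c t by (simp add: algebra_simps mult_right_mono)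
      then have "exp ((c - 1) * t) \<le> exp (- t / 2)" by simp
      moreover have "t * exp (- t / 2) \<le> 2"
      proof -
        have "1 + t / 2 \<le> exp (t / 2)" by (rule exp_ge_add_one_self)
        then have "t \<le> 2 * exp (t / 2)" by linarith
        then have "t * exp (- t / 2) \<le> 2 * exp (t / 2) * exp (- t / 2)" by (intro mult_right_mono) auto
        also have "2 * exp (t / 2) * exp (- t / 2) = 2" by (simp add: exp_minus)
        finally show ?thesis .
      qed
      ultimately have "t * exp ((c - 1) * t) \<le> 2"
        using t by (meson mult_left_mono less_imp_le order_trans)
      then have "c * (t * exp ((c - 1) * t)) \<le> c * 2" using c by (intro mult_left_mono) auto
      then show ?thesis using k by (simp add: divide_right_mono)
    qed
    also have "c * 2 / \<kappa> \<le> c * max 1 (2 / \<kappa>)"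
    proof -
      have "c * (2 / \<kappa>) \<le> c * max 1 (2 / \<kappa>)" using c by (intro mult_left_mono) auto
      then show ?thesis by simp
    qed
    finally show ?thesis unfolding eq .
  qed
qed

lemma zero_bound:
  fixes a \<kappa> R :: real
  assumes k: "0 < \<kappa>" and R: "0 \<le> R" "R \<le> 1" "R * (\<kappa> * (exp (-a))\<^sup>2) \<le> 1"
  shows "\<bar>exp (-a) powr (1 + 0) * R\<bar> \<le> max 1 (1 / \<kappa>)"
proof -
  have p0: "exp (-a) powr (1 + 0) = exp (-a)" by simp
  have ab: "\<bar>exp (-a) * R\<bar> = exp (-a) * R" using R by (simp add: abs_mult)
  show ?thesis unfolding p0 ab
  proof (cases "0 \<le> a")
    case True
    have "exp (-a) \<le> 1" using True by simp
    then have "exp (-a) * R \<le> 1 * 1" using R by (intro mult_mono) auto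
    then show "exp (-a) * R \<le> max 1 (1 / \<kappa>)" by simp
  next
    case False
    have E1: "1 \<le> exp (-a)" using False by simp
    have "R * exp (-a) * \<kappa> * 1 \<le> R * exp (-a) * \<kappa> * exp (-a)"
      by (rule mult_left_mono[OF E1]) (use R k in simp)
    also have "R * exp (-a) * \<kappa> * exp (-a) = R * (\<kappa> * (exp (-a))\<^sup>2)" by (simp add: power2_eq_square mult_ac)
    finally have "R * exp (-a) * \<kappa> \<le> 1" using R(3) by simp
    then have "exp (-a) * R \<le> 1 / \<kappa>" using k by (simp add: pos_le_divide_eq mult_ac)
    then show "exp (-a) * R \<le> max 1 (1 / \<kappa>)" by simp
  qed
qed

definition mc :: "real \<Rightarrow> real \<Rightarrow> real \<Rightarrow> real \<Rightarrow> real \<Rightarrow> real \<Rightarrow> real" where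
  "mc \<eta> \<omega> s c a b = thetafun a b powr (1 + c) * (1 + (Dfun a b)\<^sup>2 + (Tfun \<eta> \<omega> a b)\<^sup>2) powr (- s / 2)"

lemma A_eq: "A_op \<eta> \<omega> s c f \<xi> = rho f (\<lambda>a b. complex_of_real (mc \<eta> \<omega> s c a b) * \<xi> a b)"
  unfolding A_op_def theta_pow_def resolv_def mult_op_def mc_def
  by (simp add: mult.assoc)

lemma mc_meas[measurable]: "(\<lambda>p. mc \<eta> \<omega> s c (fst p) (snd p)) \<in> borel_measurable (borel :: (real \<times> real) measure)"
  unfolding mc_def thetafun_def Dfun_def Tfun_def by measurable

lemma mult_meas:
  assumes "Zf \<xi> \<in> borel_measurable (borel \<Otimes>\<^sub>M borel)"
    and m[measurable]: "(\<lambda>p. m (fst p) (snd p)) \<in> borel_measurable (borel :: (real \<times> real) measure)"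
  shows "Zf (\<lambda>a b. complex_of_real (m a b) * \<xi> a b) \<in> borel_measurable (borel \<Otimes>\<^sub>M borel)"
proof -
  have [measurable]: "Zf \<xi> \<in> borel_measurable borel" using assms(1) by (simp add: borel_prod)
  have "Zf (\<lambda>a b. complex_of_real (m a b) * \<xi> a b) = (\<lambda>p. complex_of_real (m (fst p) (snd p)) * Zf \<xi> p)"
    by (auto simp: Zf_def)
  also have "\<dots> \<in> borel_measurable borel" by measurable
  finally show ?thesis by (simp add: borel_prod)
qed

theorem mainTheorem6:
  fixes \<eta> \<omega> s :: real and f :: fn2
  assumes "\<omega> \<noteq> 0" and "s > 2" and "f \<in> A_S"
  shows "opnorm_sq (A_op \<eta> \<omega> s 0 f) < \<infinity>
    \<and> ((\<lambda>c. opnorm_sq (\<lambda>xi. A_op \<eta> \<omega> s c f xi - A_op \<eta> \<omega> s 0 f xi)) \<longlongrightarrow> 0) (at_right 0)"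
proof -
  have sf: "schwartz f" using assms(3) by (simp add: A_S_def)
  have mf[measurable]: "Zf f \<in> borel_measurable (borel \<Otimes>\<^sub>M borel)" by (rule schwartz_meas[OF sf])
  define K where "K = (\<integral>\<^sup>+q. ennreal (norm (Zf f q)) \<partial>lborel)"
  have Kfin: "K < \<infinity>" unfolding K_def by (rule schwartz_K[OF sf])
  obtain k where kK: "K = ennreal k" and k0: "0 \<le> k" using Kfin by (cases K) auto
  obtain Cf where Cf: "\<And>a b. (1 + a\<^sup>2 + b\<^sup>2) ^ 0 * cmod (pdiff [] f a b) \<le> Cf"
    using sf unfolding schwartz_def by blast
  have Cf': "\<And>q. norm (Zf f q) \<le> Cf" using Cf by (simp add: Zf_def)
  define \<kappa> where "\<kappa> = \<omega>\<^sup>2 / (4 * (1 + \<eta>\<^sup>2))"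
  have kp: "0 < \<kappa>" unfolding \<kappa>_def using assms(1) by (simp add: add_pos_nonneg)
  define Rm where "Rm a b = (1 + (Dfun a b)\<^sup>2 + (Tfun \<eta> \<omega> a b)\<^sup>2) powr (- s / 2)" for a b
  have s2: "2 \<le> s" using assms(2) by simp
  have Rp: "0 \<le> Rm a b" "Rm a b \<le> 1" "Rm a b * (\<kappa> * (exp (-a))\<^sup>2) \<le> 1" for a b
    using R_props[OF assms(1) s2, of a b \<eta>] unfolding Rm_def \<kappa>_def by auto
  have mcR: "mc \<eta> \<omega> s c a b = exp (-a) powr (1 + c) * Rm a b" for c a b
    unfolding mc_def Rm_def thetafun_def by simp
  define L where "L = max 1 (2 / \<kappa>)"
  define L0 where "L0 = max 1 (1 / \<kappa>)"
  have b0: "\<bar>mc \<eta> \<omega> s 0 a b\<bar> \<le> L0" for a b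
    unfolding mcR L0_def using zero_bound[OF kp Rp] by simp
  have bc: "\<bar>mc \<eta> \<omega> s c a b - mc \<eta> \<omega> s 0 a b\<bar> \<le> c * L" if "0 < c" "c \<le> 1/2" for c a b
  proof -
    have "mc \<eta> \<omega> s c a b - mc \<eta> \<omega> s 0 a b = (exp (-a) powr (1 + c) - exp (-a) powr (1 + 0)) * Rm a b"
      unfolding mcR by (simp add: left_diff_distrib)
    then show ?thesis unfolding L_def using diff_bound[OF that kp Rp] by simp
  qed
  have opest: "l2sq (rho f (\<lambda>a b. complex_of_real (m a b) * \<xi> a b)) \<le> ennreal (k * k * M\<^sup>2)"
    if \<xi>: "\<xi> \<in> {xi \<in> L2. l2sq xi \<le> 1}" and mm: "(\<lambda>p. m (fst p) (snd p)) \<in> borel_measurable (borel :: (real \<times> real) measure)"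
       and mb: "\<And>a b. \<bar>m a b\<bar> \<le> M" for \<xi> m M
  proof -
    have mx: "Zf \<xi> \<in> borel_measurable (borel \<Otimes>\<^sub>M borel)" using \<xi> L2_meas by auto
    have "l2sq (rho f (\<lambda>a b. complex_of_real (m a b) * \<xi> a b)) \<le> K * K * l2sq (\<lambda>a b. complex_of_real (m a b) * \<xi> a b)"
      unfolding K_def by (rule rho_l2[OF mf mult_meas[OF mx mm]])
    also have "\<dots> \<le> K * K * (ennreal (M\<^sup>2) * l2sq \<xi>)"
      by (intro mult_left_mono mult_l2[OF mb mx]) auto
    also have "\<dots> \<le> K * K * (ennreal (M\<^sup>2) * 1)"
      using \<xi> by (intro mult_left_mono) auto
    also have "\<dots> = ennreal (k * k * M\<^sup>2)" using k0 by (simp add: kK ennreal_mult)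
    finally show ?thesis .
  qed
  have part1: "opnorm_sq (A_op \<eta> \<omega> s 0 f) \<le> ennreal (k * k * L0\<^sup>2)"
    unfolding opnorm_sq_def
  proof (rule SUP_least)
    fix \<xi> assume \<xi>: "\<xi> \<in> {xi \<in> L2. l2sq xi \<le> 1}"
    show "l2sq (A_op \<eta> \<omega> s 0 f \<xi>) \<le> ennreal (k * k * L0\<^sup>2)"
      unfolding A_eq by (rule opest[OF \<xi> mc_meas b0])
  qed
  have part2: "opnorm_sq (\<lambda>xi. A_op \<eta> \<omega> s c f xi - A_op \<eta> \<omega> s 0 f xi) \<le> ennreal (k * k * (c * L)\<^sup>2)"
    if c: "0 < c" "c \<le> 1/2" for c
    unfolding opnorm_sq_def
  proof (rule SUP_least)
    fix \<xi> assume \<xi>: "\<xi> \<in> {xi \<in> L2. l2sq xi \<le> 1}"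
    have mx: "Zf \<xi> \<in> borel_measurable (borel \<Otimes>\<^sub>M borel)" using \<xi> L2_meas by auto
    have xfin: "l2sq \<xi> < \<infinity>" using \<xi> L2_fin by auto
    have fin: "l2sq (\<lambda>a b. complex_of_real (m a b) * \<xi> a b) < \<infinity>" if "\<And>a b. \<bar>m a b\<bar> \<le> M" for m M
    proof -
      have "l2sq (\<lambda>a b. complex_of_real (m a b) * \<xi> a b) \<le> ennreal (M\<^sup>2) * l2sq \<xi>"
        by (rule mult_l2[OF that mx])
      also have "\<dots> < \<infinity>" using xfin by (simp add: ennreal_mult_less_top)
      finally show ?thesis .
    qed
    have bcc: "\<bar>mc \<eta> \<omega> s c a b\<bar> \<le> c * L + L0" for a b
      using bc[OF c, of a b] b0[of a b] by linarith
    let ?z1 = "\<lambda>a b. complex_of_real (mc \<eta> \<omega> s c a b) * \<xi> a b"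
    let ?z0 = "\<lambda>a b. complex_of_real (mc \<eta> \<omega> s 0 a b) * \<xi> a b"
    have eqd: "(\<lambda>a b. A_op \<eta> \<omega> s c f \<xi> a b - A_op \<eta> \<omega> s 0 f \<xi> a b)
       = rho f (\<lambda>a b. complex_of_real (mc \<eta> \<omega> s c a b - mc \<eta> \<omega> s 0 a b) * \<xi> a b)"
    proof (intro ext)
      fix a b
      have i1: "integrable lborel (\<lambda>q. Zf f (fst q, exp (-a) * snd q) * Zf ?z1 (a - fst q, b - snd q))"
        by (rule integ_g[OF mf mult_meas[OF mx mc_meas] Kfin[unfolded K_def] Cf' fin[OF bcc]])
      have i0: "integrable lborel (\<lambda>q. Zf f (fst q, exp (-a) * snd q) * Zf ?z0 (a - fst q, b - snd q))"
        by (rule integ_g[OF mf mult_meas[OF mx mc_meas] Kfin[unfolded K_def] Cf' fin[OF b0]])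
      have "A_op \<eta> \<omega> s c f \<xi> a b - A_op \<eta> \<omega> s 0 f \<xi> a b = rho f (\<lambda>x y. ?z1 x y - ?z0 x y) a b"
        unfolding A_eq by (rule rho_diff[OF i1 i0])
      also have "(\<lambda>x y. ?z1 x y - ?z0 x y) = (\<lambda>a b. complex_of_real (mc \<eta> \<omega> s c a b - mc \<eta> \<omega> s 0 a b) * \<xi> a b)"
        by (simp add: left_diff_distrib)
      finally show "A_op \<eta> \<omega> s c f \<xi> a b - A_op \<eta> \<omega> s 0 f \<xi> a b = rho f (\<lambda>a b. complex_of_real (mc \<eta> \<omega> s c a b - mc \<eta> \<omega> s 0 a b) * \<xi> a b) a b" .
    qed
    have dm: "(\<lambda>p. mc \<eta> \<omega> s c (fst p) (snd p) - mc \<eta> \<omega> s 0 (fst p) (snd p)) \<in> borel_measurable (borel :: (real \<times> real) measure)"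
      by measurable
    have "(\<lambda>xi. A_op \<eta> \<omega> s c f xi - A_op \<eta> \<omega> s 0 f xi) \<xi> = (\<lambda>a b. A_op \<eta> \<omega> s c f \<xi> a b - A_op \<eta> \<omega> s 0 f \<xi> a b)"
      by (simp add: fun_diff_def)
    also have "\<dots> = rho f (\<lambda>a b. complex_of_real (mc \<eta> \<omega> s c a b - mc \<eta> \<omega> s 0 a b) * \<xi> a b)" by (rule eqd)
    finally show "l2sq ((\<lambda>xi. A_op \<eta> \<omega> s c f xi - A_op \<eta> \<omega> s 0 f xi) \<xi>) \<le> ennreal (k * k * (c * L)\<^sup>2)"
      using opest[OF \<xi> dm bc[OF c]] by simp
  qed
  show ?thesis
  proof
    show "opnorm_sq (A_op \<eta> \<omega> s 0 f) < \<infinity>" using part1 by (rule le_less_trans) simp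
    show "((\<lambda>c. opnorm_sq (\<lambda>xi. A_op \<eta> \<omega> s c f xi - A_op \<eta> \<omega> s 0 f xi)) \<longlongrightarrow> 0) (at_right 0)"
    proof (rule tendsto_sandwich[where f="\<lambda>_. 0" and h="\<lambda>c. ennreal (k * k * (c * L)\<^sup>2)"])
      show "\<forall>\<^sub>F c in at_right 0. (0::ennreal) \<le> opnorm_sq (\<lambda>xi. A_op \<eta> \<omega> s c f xi - A_op \<eta> \<omega> s 0 f xi)" by simp
      show "\<forall>\<^sub>F c in at_right (0::real). opnorm_sq (\<lambda>xi. A_op \<eta> \<omega> s c f xi - A_op \<eta> \<omega> s 0 f xi) \<le> ennreal (k * k * (c * L)\<^sup>2)"
        unfolding eventually_at_right_field using part2 by (intro exI[of _ "1/2"]) auto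
      show "((\<lambda>_. 0::ennreal) \<longlongrightarrow> 0) (at_right 0)" by simp
      have "((\<lambda>c::real. k * k * (c * L)\<^sup>2) \<longlongrightarrow> k * k * (0 * L)\<^sup>2) (at_right 0)"
        by (intro tendsto_intros)
      then have "((\<lambda>c::real. ennreal (k * k * (c * L)\<^sup>2)) \<longlongrightarrow> ennreal (k * k * (0 * L)\<^sup>2)) (at_right 0)"
        by (rule tendsto_ennrealI)
      then show "((\<lambda>c::real. ennreal (k * k * (c * L)\<^sup>2)) \<longlongrightarrow> 0) (at_right 0)" by simp
    qed
  qed
qed

end
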